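(* Consider three sets of variables $v^\alpha,u^\alpha,w^\alpha$ ($1\le\alpha\le N$) and rational Miura transformations $v^\alpha\mapsto u^\alpha(v^*_*;\varepsilon)$ and $u^\alpha\mapsto w^\alpha(u^*_*;\varepsilon)$ such that $$\frac{\partial u^\alpha(v^*_*;\varepsilon)}{\partial v^1}=\delta^{\alpha,1},\quad\frac{\partial u^\alpha(v^*_*;\varepsilon)^{\mathrm{pol}}}{\partial v^1_x}=0,\quad\frac{\partial w^\alpha(u^*_*;\varepsilon)}{\partial u^1}=\delta^{\alpha,1},\quad\frac{\partial w^\alpha(u^*_*;\varepsilon)^{\mathrm{pol}}}{\partial u^1_x}=0.$$ Then the polynomial part of the composition $v^\alpha\mapsto w^\alpha(u^*_*(v^*_*;\varepsilon);\varepsilon)$ is equal to the composition of the polynomial parts $v^\alpha\mapsto u^\alpha(v^*_*;\varepsilon)^{\mathrm{pol}}$ and $u^\alpha\mapsto w^\alpha(u^*_*;\varepsilon)^{\mathrm{pol}}$.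
   Context: For variables $v^\alpha_k$ ($v^\alpha=v^\alpha_0$, $v^\alpha_x=v^\alpha_1$): $\mathcal A_v$ = polynomials in $v^\alpha_k$, $k>0$, over $\mathbb C[[v^1,\dots,v^N]]$, graded by $\deg v^\alpha_k=k$; $\deg\varepsilon=-1$. $\mathcal A^{\mathrm{rt},[d]}_v$: span of $\sum_{i\ge m}\frac{P_i(v^*_* )}{(v^1_x)^i}$ with $m\in\mathbb Z$, $P_i\in\mathcal A^{[d+i]}_v$, $\partial P_i/\partial v^1_x=0$ (interpreted as formal power series in $v^\alpha_n-\delta^{\alpha,1}\delta_{n,1}$); $\mathcal A^{\mathrm{rt}}_v=\bigoplus_d\mathcal A^{\mathrm{rt},[d]}_v$; polynomial part $\big(\sum_{i\ge m}P_i/(v^1_x)^i\big)^{\mathrm{pol}}=\sum_{i=m}^0P_i/(v^1_x)^i\in\mathcal A_v$; $\widehat{\mathcal A}^{\mathrm{rt}}_v=\mathcal A^{\mathrm{rt}}_v[[\varepsilon]]$, polynomial part taken coefficientwise. Tame: there is $C$ such that no $P_i$ depends on $v^\alpha_k$ with $k>C$ (for each $\varepsilon$-coefficient); $\widehat{\mathcal A}^{\mathrm{rt},\mathrm t,[d]}_v$ = tame elements of degree $d$. A rational Miura transformation is $v^\alpha\mapsto v^\alpha+\varepsilon f^\alpha(v^*_*;\varepsilon)$, $f^\alpha\in\widehat{\mathcal A}^{\mathrm{rt},\mathrm t,[1]}_v$; these form a group (composition is by substitution), and the polynomial part of a rational Miura transformation is an ordinary Miura transformation. The same notations apply to $u$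 and $w$. *)

theory Defs
  imports Complex_Main "HOL-Library.Poly_Mapping" "HOL-Library.Product_Lexorder"
begin

text \<open>Jet variable (a,k) stands for the variable v^a_k (a = 1..N, k = 0,1,2,...);
  (1,1) is v^1_x, the only variable allowed a negative exponent.
  An element of A^rt (epsilon-free) is a coefficient function on monomials;
  an element of A^rt[[eps]] is a sequence (indexed by the power of eps) of such.\<close>

type_synonym jet = "nat \<times> nat"
type_synonym mon = "jet \<Rightarrow>\<^sub>0 int"
type_synonym rdp = "mon \<Rightarrow> complex"
type_synonym ser = "nat \<Rightarrow> rdp"

text \<open>Formal sum of a family with finite support (all sums below are of this kind
  for the elements under consideration).\<close>
definition fsum :: "('i \<Rightarrow> complex) \<Rightarrow> complex" where
  "fsum c = (\<Sum>i\<in>{i. c i \<noteq> 0}. c i)"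

definition ev :: "jet \<Rightarrow> mon" where
  "ev x = Poly_Mapping.single x 1"

definition adm :: "nat \<Rightarrow> mon \<Rightarrow> bool" where
  "adm N n \<longleftrightarrow> (\<forall>x\<in>Poly_Mapping.keys n. 1 \<le> fst x \<and> fst x \<le> N \<and> (0 \<le> Poly_Mapping.lookup n x \<or> x = (1,1)))"

definition wt :: "mon \<Rightarrow> int" where
  "wt n = (\<Sum>x\<in>Poly_Mapping.keys n. int (snd x) * Poly_Mapping.lookup n x)"

text \<open>F lies in hat A^{rt,[d]}_v: the eps^j coefficient is a sum of admissible monomials
  of degree d + j (deg eps = -1).  This is exactly the span of sums
  sum_{i>=m} P_i/(v^1_x)^i with P_i in A^{[d+i]} independent of v^1_x.\<close>
definition homog :: "nat \<Rightarrow> int \<Rightarrow> ser \<Rightarrow> bool" where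
  "homog N d F \<longleftrightarrow> (\<forall>j n. F j n \<noteq> 0 \<longrightarrow> adm N n \<and> wt n - int j = d)"

definition tame :: "ser \<Rightarrow> bool" where
  "tame F \<longleftrightarrow> (\<forall>j. \<exists>C. \<forall>n. F j n \<noteq> 0 \<longrightarrow> (\<forall>x\<in>Poly_Mapping.keys n. snd x \<le> C))"

definition rt_tame :: "nat \<Rightarrow> int \<Rightarrow> ser \<Rightarrow> bool" where
  "rt_tame N d F \<longleftrightarrow> homog N d F \<and> tame F"

definition pol :: "ser \<Rightarrow> ser" where
  "pol F j n = (if 0 \<le> Poly_Mapping.lookup n (1,1) then F j n else 0)"

definition szero :: ser where "szero = (\<lambda>j n. 0)"
definition sone :: ser where "sone = (\<lambda>j n. if j = 0 \<and> n = 0 then 1 else 0)"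

definition pd :: "jet \<Rightarrow> ser \<Rightarrow> ser" where
  "pd x F j n = of_int (Poly_Mapping.lookup n x + 1) * F j (n + ev x)"

text \<open>total x-derivative: sum_{a,k} v^a_{k+1} d/dv^a_k\<close>
definition Dx :: "ser \<Rightarrow> ser" where
  "Dx F j n = fsum (\<lambda>x::jet. of_int (Poly_Mapping.lookup n x + 1) * F j (n + ev x - ev (fst x, Suc (snd x))))"

definition smul :: "ser \<Rightarrow> ser \<Rightarrow> ser" where
  "smul F G j n = (\<Sum>i\<le>j. fsum (\<lambda>p. F i p * G (j - i) (n - p)))"

definition spow :: "ser \<Rightarrow> nat \<Rightarrow> ser" where
  "spow F r = (smul F ^^ r) sone"

text \<open>the Miura transformation v^a |-> v^a + eps f^a as element\<close>
definition miura :: "(nat \<Rightarrow> ser) \<Rightarrow> nat \<Rightarrow> ser" where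
  "miura f a j n = (if j = 0 then (if n = ev (a,0) then 1 else 0) else f a (j - 1) n)"

text \<open>substitution u^a_k := d_x^k (v^a + eps f^a) = v^a_k + eps h_(a,k) into G(u;eps):
  each factor (u_x)^e is expanded as sum_r (e choose r) v_x^(e-r) eps^r h_x^r
  (generalised binomial; for e < 0, which only occurs for x = (1,1), this is the
  expansion of the rational function in eps).\<close>
definition hjet :: "(nat \<Rightarrow> ser) \<Rightarrow> jet \<Rightarrow> ser" where
  "hjet f x = (Dx ^^ snd x) (f (fst x))"

definition hprod :: "(nat \<Rightarrow> ser) \<Rightarrow> (jet \<Rightarrow>\<^sub>0 nat) \<Rightarrow> ser" where
  "hprod f r = foldr smul (map (\<lambda>x. spow (hjet f x) (Poly_Mapping.lookup r x)) (sorted_list_of_set (Poly_Mapping.keys r))) sone"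

definition rsz :: "(jet \<Rightarrow>\<^sub>0 nat) \<Rightarrow> nat" where
  "rsz r = (\<Sum>x\<in>Poly_Mapping.keys r. Poly_Mapping.lookup r x)"

definition bincoef :: "mon \<Rightarrow> (jet \<Rightarrow>\<^sub>0 nat) \<Rightarrow> complex" where
  "bincoef m r = (\<Prod>x\<in>Poly_Mapping.keys r. (of_int (Poly_Mapping.lookup m x) :: complex) gchoose (Poly_Mapping.lookup r x))"

definition subst :: "(nat \<Rightarrow> ser) \<Rightarrow> ser \<Rightarrow> ser" where
  "subst f G J n = fsum (\<lambda>(j, m, r :: jet \<Rightarrow>\<^sub>0 nat).
     if j + rsz r \<le> J
     then G j m * bincoef m r * hprod f r (J - j - rsz r) (n - (m - Poly_Mapping.map int r))
     else 0)"

end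

theory Submission
  imports Defs
begin

definition SS :: "ser \<Rightarrow> bool" where
  "SS F \<longleftrightarrow> (\<forall>j n. F j n \<noteq> 0 \<longrightarrow> Poly_Mapping.lookup n (1,1) \<le> 0)"
definition TT :: "ser \<Rightarrow> bool" where
  "TT F \<longleftrightarrow> (\<forall>j n. F j n \<noteq> 0 \<longrightarrow> Poly_Mapping.lookup n (1,0) = 0)"

lemma fsum_nz: "fsum c \<noteq> 0 \<Longrightarrow> \<exists>i. c i \<noteq> 0"
  unfolding fsum_def by (metis (mono_tags, lifting) empty_Collect_eq sum.empty)

lemma fsum_zero: "(\<And>i. c i = 0) \<Longrightarrow> fsum c = 0"
  unfolding fsum_def by simp

lemma lookup_ev: "Poly_Mapping.lookup (ev x) y = (if x = y then 1 else 0)"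
  unfolding ev_def by (simp add: lookup_single)

lemma lookup_mapint: "Poly_Mapping.lookup (Poly_Mapping.map int r) x = int (Poly_Mapping.lookup r x)"
  by (simp add: Poly_Mapping.map.rep_eq when_def)

lemma smul_SS: assumes "SS F" "SS G" shows "SS (smul F G)"
  unfolding SS_def
proof (intro allI impI)
  fix j n assume "smul F G j n \<noteq> 0"
  then obtain i where "fsum (\<lambda>p. F i p * G (j - i) (n - p)) \<noteq> 0"
    unfolding smul_def by (meson sum.not_neutral_contains_not_neutral)
  then obtain p where "F i p * G (j - i) (n - p) \<noteq> 0" using fsum_nz by blast
  then have "Poly_Mapping.lookup p (1,1) \<le> 0" "Poly_Mapping.lookup (n - p) (1,1) \<le> 0"
    using assms unfolding SS_def by auto
  then show "Poly_Mapping.lookup n (1,1) \<le> 0" by (simp add: lookup_minus)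
qed

lemma pol_smul: assumes "SS F" "SS G" shows "pol (smul F G) = smul (pol F) (pol G)"
proof (intro ext)
  fix j n
  show "pol (smul F G) j n = smul (pol F) (pol G) j n"
  proof (cases "0 \<le> Poly_Mapping.lookup n (1,1)")
    case True
    have "F i p * G k (n - p) = pol F i p * pol G k (n - p)" for i k p
    proof (cases "F i p * G k (n - p) = 0")
      case False
      then have "Poly_Mapping.lookup p (1,1) \<le> 0" "Poly_Mapping.lookup (n - p) (1,1) \<le> 0"
        using assms unfolding SS_def by auto
      then have "Poly_Mapping.lookup p (1,1) = 0" "Poly_Mapping.lookup (n - p) (1,1) = 0"
        using True by (auto simp: lookup_minus)
      then show ?thesis by (simp add: pol_def)
    next
      case z: True
      have "pol F i p * pol G k (n - p) = 0"
      proof (cases "F i p = 0")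
        case True then show ?thesis by (simp add: pol_def)
      next
        case False
        then have "G k (n - p) = 0" using z by simp
        then show ?thesis by (simp add: pol_def)
      qed
      then show ?thesis using z by metis
    qed
    then show ?thesis using True unfolding pol_def smul_def by simp
  next
    case False
    have "pol F i p * pol G k (n - p) = 0" for i k p
      using False by (auto simp: pol_def lookup_minus)
    then show ?thesis using False unfolding smul_def
      by (simp add: pol_def fsum_zero)
  qed
qed

lemma sone_SS: "SS sone" unfolding SS_def sone_def by auto
lemma pol_sone: "pol sone = sone" unfolding pol_def sone_def by (auto intro!: ext)

lemma pol_SS: "SS F \<Longrightarrow> SS (pol F)" unfolding SS_def pol_def by auto
lemma pol_TT: "TT F \<Longrightarrow> TT (pol F)" unfolding TT_def pol_def by auto

lemma spow_Suc: "spow F (Suc k) = smul F (spow F k)"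
  unfolding spow_def by simp
lemma spow_0: "spow F 0 = sone"
  unfolding spow_def by simp

lemma spow_SS: "SS F \<Longrightarrow> SS (spow F k)"
  by (induction k) (auto simp: spow_0 spow_Suc sone_SS smul_SS)

lemma pol_spow: "SS F \<Longrightarrow> pol (spow F k) = spow (pol F) k"
  by (induction k) (auto simp: spow_0 spow_Suc pol_sone pol_smul spow_SS)

lemma Dx_SSTT: assumes "SS F" "TT F" shows "SS (Dx F) \<and> TT (Dx F)"
proof -
  have *: "Poly_Mapping.lookup n (1,1) \<le> 0 \<and> Poly_Mapping.lookup n (1,0) = 0"
    if nz0: "Dx F j n \<noteq> 0" for j n
  proof -
    obtain x where x: "of_int (Poly_Mapping.lookup n x + 1) * F j (n + ev x - ev (fst x, Suc (snd x))) \<noteq> 0"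
      using fsum_nz[OF nz0[unfolded Dx_def]] by blast
    define q where "q = n + ev x - ev (fst x, Suc (snd x))"
    have fq: "F j q \<noteq> 0" using x q_def by auto
    have c: "Poly_Mapping.lookup n x + 1 \<noteq> 0"
    proof
      assume "Poly_Mapping.lookup n x + 1 = 0"
      then show False using x by (metis mult_zero_left of_int_0)
    qed
    have q11: "Poly_Mapping.lookup q (1,1) \<le> 0" "Poly_Mapping.lookup q (1,0) = 0"
      using fq assms unfolding SS_def TT_def by auto
    have lq: "Poly_Mapping.lookup q y = Poly_Mapping.lookup n y + (if x = y then 1 else 0)
       - (if (fst x, Suc (snd x)) = y then 1 else 0)" for y
      unfolding q_def by (simp add: lookup_add lookup_minus lookup_ev)
    have "x \<noteq> (1,0)"
    proof
      assume "x = (1,0)"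
      then show False using lq[of "(1,0)"] q11 c by simp
    qed
    then show ?thesis using lq[of "(1,1)"] lq[of "(1,0)"] q11
      by (cases x) (auto split: if_splits)
  qed
  then show ?thesis unfolding SS_def TT_def by blast
qed

lemma pol_Dx: assumes "SS F" "TT F" shows "pol (Dx F) = Dx (pol F)"
proof (intro ext)
  fix j n
  show "pol (Dx F) j n = Dx (pol F) j n"
  proof (cases "0 \<le> Poly_Mapping.lookup n (1,1)")
    case True
    have eqx: "of_int (Poly_Mapping.lookup n x + 1) * F j (n + ev x - ev (fst x, Suc (snd x)))
        = of_int (Poly_Mapping.lookup n x + 1) * pol F j (n + ev x - ev (fst x, Suc (snd x)))" for x
    proof -
      define q where "q = n + ev x - ev (fst x, Suc (snd x))"
      have lq: "Poly_Mapping.lookup q y = Poly_Mapping.lookup n y + (if x = y then 1 else 0)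
         - (if (fst x, Suc (snd x)) = y then 1 else 0)" for y
        unfolding q_def by (simp add: lookup_add lookup_minus lookup_ev)
      show ?thesis
      proof (cases "x = (1,0)")
        case True
        show ?thesis
        proof (cases "F j q = 0")
          case True then show ?thesis unfolding q_def[symmetric] by (simp add: pol_def)
        next
          case False
          then have "Poly_Mapping.lookup q (1,0) = 0" using assms unfolding TT_def by auto
          then have "Poly_Mapping.lookup n x + 1 = 0" using lq[of "(1,0)"] \<open>x = (1,0)\<close> by simp
          then show ?thesis by simp
        qed
      next
        case False
        then have "0 \<le> Poly_Mapping.lookup q (1,1)" using lq[of "(1,1)"] True by (cases x) auto
        then show ?thesis unfolding q_def[symmetric] by (simp add: pol_def)
      qed
    qed
    have "pol (Dx F) j n = Dx F j n" using True by (simp add: pol_def)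
    also have "\<dots> = Dx (pol F) j n"
      unfolding Dx_def by (rule arg_cong[where f=fsum, OF ext]) (rule eqx)
    finally show ?thesis .
  next
    case False
    have "of_int (Poly_Mapping.lookup n x + 1) * pol F j (n + ev x - ev (fst x, Suc (snd x))) = 0" for x
    proof -
      define q where "q = n + ev x - ev (fst x, Suc (snd x))"
      have lq: "Poly_Mapping.lookup q y = Poly_Mapping.lookup n y + (if x = y then 1 else 0)
         - (if (fst x, Suc (snd x)) = y then 1 else 0)" for y
        unfolding q_def by (simp add: lookup_add lookup_minus lookup_ev)
      show ?thesis
      proof (cases "pol F j q = 0")
        case True then show ?thesis unfolding q_def[symmetric] by simp
      next
        case nz: False
        then have "F j q \<noteq> 0" "0 \<le> Poly_Mapping.lookup q (1,1)"
          by (auto simp: pol_def split: if_splits)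
        then have "Poly_Mapping.lookup q (1,1) = 0" using assms unfolding SS_def by force
        then have "x = (1,1)" "Poly_Mapping.lookup n (1,1) = -1"
          using lq[of "(1,1)"] False by (cases x; auto split: if_splits)+
        then show ?thesis by simp
      qed
    qed
    then show ?thesis using False unfolding pol_def[of "Dx F"] Dx_def
      by (simp add: fsum_zero)
  qed
qed

lemma Dxpow: assumes "SS F" "TT F"
  shows "SS ((Dx ^^ k) F) \<and> TT ((Dx ^^ k) F) \<and> pol ((Dx ^^ k) F) = (Dx ^^ k) (pol F)"
  using assms by (induction k) (auto simp: Dx_SSTT pol_Dx)

lemma hprod_list:
  assumes "\<And>b. b \<in> A \<Longrightarrow> SS (f b) \<and> TT (f b)" "set xs \<subseteq> {x. fst x \<in> A}"
  shows "SS (foldr smul (map (\<lambda>x. spow (hjet f x) (h x)) xs) sone) \<and>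
     pol (foldr smul (map (\<lambda>x. spow (hjet f x) (h x)) xs) sone)
     = foldr smul (map (\<lambda>x. spow (hjet (\<lambda>b. pol (f b)) x) (h x)) xs) sone"
  using assms(2)
proof (induction xs)
  case Nil then show ?case by (simp add: sone_SS pol_sone)
next
  case (Cons x xs)
  then have fx: "SS (f (fst x))" "TT (f (fst x))" using assms(1) by auto
  have hj: "SS (hjet f x)" "pol (hjet f x) = hjet (\<lambda>b. pol (f b)) x"
    unfolding hjet_def using Dxpow[OF fx] by auto
  show ?case using Cons hj
    by (auto simp: smul_SS spow_SS pol_smul pol_spow)
qed

lemma hprod_ok:
  assumes "\<And>b. b \<in> A \<Longrightarrow> SS (f b) \<and> TT (f b)" "\<forall>x\<in>Poly_Mapping.keys r. fst x \<in> A"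
  shows "SS (hprod f r) \<and> pol (hprod f r) = hprod (\<lambda>b. pol (f b)) r"
  unfolding hprod_def
  by (rule hprod_list[OF assms(1)]) (use assms(2) in auto)

lemma bincoef_keys:
  assumes "bincoef m r \<noteq> 0" shows "Poly_Mapping.keys r \<subseteq> Poly_Mapping.keys m"
proof
  fix x assume x: "x \<in> Poly_Mapping.keys r"
  show "x \<in> Poly_Mapping.keys m"
  proof (rule ccontr)
    assume "x \<notin> Poly_Mapping.keys m"
    then have "Poly_Mapping.lookup m x = 0" by (simp add: in_keys_iff)
    moreover have "Poly_Mapping.lookup r x \<noteq> 0" using x by (simp add: in_keys_iff)
    ultimately have "(of_int (Poly_Mapping.lookup m x) :: complex) gchoose (Poly_Mapping.lookup r x) = 0"
      by (simp add: gbinomial_0_left)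
    then have "bincoef m r = 0" unfolding bincoef_def using x
      by (meson finite_keys prod_zero)
    then show False using assms by simp
  qed
qed

theorem lemma7p4:
  fixes N :: nat and f g :: "nat \<Rightarrow> ser"
  assumes "1 \<le> N"
    and "\<forall>a\<in>{1..N}. rt_tame N 1 (f a)"
    and "\<forall>a\<in>{1..N}. rt_tame N 1 (g a)"
    and "\<forall>a\<in>{1..N}. pd (1,0) (miura f a) = (if a = 1 then sone else szero)"
    and "\<forall>a\<in>{1..N}. pd (1,1) (pol (miura f a)) = szero"
    and "\<forall>a\<in>{1..N}. pd (1,0) (miura g a) = (if a = 1 then sone else szero)"
    and "\<forall>a\<in>{1..N}. pd (1,1) (pol (miura g a)) = szero"
  shows "\<forall>a\<in>{1..N}. pol (subst f (miura g a)) = subst (\<lambda>b. pol (f b)) (miura (\<lambda>b. pol (g b)) a)"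
proof (intro ballI ext)
  fix a J n assume a: "a \<in> {1..N}"
  define G where "G = miura g a"
  let ?L = "\<lambda>m x. Poly_Mapping.lookup m x"
  have fST: "SS (f b) \<and> TT (f b)" if b: "b \<in> {1..N}" for b
  proof
    show "SS (f b)" unfolding SS_def
    proof (intro allI impI)
      fix j n0 assume nz: "f b j n0 \<noteq> 0"
      show "?L n0 (1,1) \<le> 0"
      proof (rule ccontr)
        assume pos: "\<not> ?L n0 (1,1) \<le> 0"
        define n1 where "n1 = n0 - ev (1,1)"
        have e1: "n1 + ev (1,1) = n0" unfolding n1_def by simp
        have e2: "?L n1 (1,1) + 1 = ?L n0 (1,1)" unfolding n1_def by (simp add: lookup_minus lookup_ev)
        have "pd (1,1) (pol (miura f b)) (Suc j) n1 = szero (Suc j) n1" using assms(5) b by simp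
        then have "of_int (?L n0 (1,1)) * f b j n0 = 0"
          unfolding pd_def e1 e2 using pos by (simp add: pol_def miura_def szero_def)
        then show False using nz pos by simp
      qed
    qed
    show "TT (f b)" unfolding TT_def
    proof (intro allI impI)
      fix j n0 assume nz: "f b j n0 \<noteq> 0"
      have "adm N n0" using assms(2) b nz unfolding rt_tame_def homog_def by blast
      then have ge: "0 \<le> ?L n0 (1,0)" unfolding adm_def
        by (metis in_keys_iff old.prod.inject order_refl zero_neq_one)
      show "?L n0 (1,0) = 0"
      proof (rule ccontr)
        assume pos: "?L n0 (1,0) \<noteq> 0"
        define n1 where "n1 = n0 - ev (1,0)"
        have e1: "n1 + ev (1,0) = n0" unfolding n1_def by simp
        have e2: "?L n1 (1,0) + 1 = ?L n0 (1,0)" unfolding n1_def by (simp add: lookup_minus lookup_ev)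
        have "pd (1,0) (miura f b) (Suc j) n1 = (if b = 1 then sone else szero) (Suc j) n1"
          using assms(4) b by simp
        then have "of_int (?L n0 (1,0)) * f b j n0 = 0"
          unfolding pd_def e1 e2 by (simp add: miura_def szero_def sone_def)
        then show False using nz pos by simp
      qed
    qed
  qed
  have GS: "SS G" unfolding SS_def
  proof (intro allI impI)
    fix j m0 assume nz: "G j m0 \<noteq> 0"
    show "?L m0 (1,1) \<le> 0"
    proof (rule ccontr)
      assume pos: "\<not> ?L m0 (1,1) \<le> 0"
      define n1 where "n1 = m0 - ev (1,1)"
      have e1: "n1 + ev (1,1) = m0" unfolding n1_def by simp
      have e2: "?L n1 (1,1) + 1 = ?L m0 (1,1)" unfolding n1_def by (simp add: lookup_minus lookup_ev)
      have "pd (1,1) (pol G) j n1 = szero j n1" using assms(7) a unfolding G_def by simp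
      then have "of_int (?L m0 (1,1)) * G j m0 = 0"
        unfolding pd_def e1 e2 using pos by (simp add: pol_def szero_def)
      then show False using nz pos by simp
    qed
  qed
  have Gadm: "\<forall>x\<in>Poly_Mapping.keys m. fst x \<in> {1..N}" if nz: "G j m \<noteq> 0" for j m
  proof (cases "j = 0")
    case True
    then have "m = ev (a,0)" using nz unfolding G_def miura_def by (auto split: if_splits)
    then show ?thesis using a by (simp add: ev_def)
  next
    case False
    then have "g a (j - 1) m \<noteq> 0" using nz unfolding G_def miura_def by simp
    then have "adm N m" using assms(3) a unfolding rt_tame_def homog_def by blast
    then show ?thesis unfolding adm_def by auto
  qed
  have G': "miura (\<lambda>b. pol (g b)) a = pol G"
    unfolding G_def by (auto intro!: ext simp: miura_def pol_def lookup_ev)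
  have HO: "SS (hprod f r) \<and> pol (hprod f r) = hprod (\<lambda>b. pol (f b)) r"
    if "G j m \<noteq> 0" "bincoef m r \<noteq> 0" for j m r
  proof (rule hprod_ok[where A="{1..N}"])
    show "\<And>b. b \<in> {1..N} \<Longrightarrow> SS (f b) \<and> TT (f b)" using fST by blast
    show "\<forall>x\<in>Poly_Mapping.keys r. fst x \<in> {1..N}"
      using Gadm[OF that(1)] bincoef_keys[OF that(2)] by blast
  qed
  define T1 where "T1 j m r = (if j + rsz r \<le> J
     then G j m * bincoef m r * hprod f r (J - j - rsz r) (n - (m - Poly_Mapping.map int r))
     else 0)" for j m r
  define T2 where "T2 j m r = (if j + rsz r \<le> J
     then pol G j m * bincoef m r * hprod (\<lambda>b. pol (f b)) r (J - j - rsz r) (n - (m - Poly_Mapping.map int r))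
     else 0)" for j m r
  have s1: "subst f G J n = fsum (\<lambda>(j, m, r). T1 j m r)" unfolding subst_def T1_def ..
  have s2: "subst (\<lambda>b. pol (f b)) (pol G) J n = fsum (\<lambda>(j, m, r). T2 j m r)" unfolding subst_def T2_def ..
  have lq: "?L (n - (m - Poly_Mapping.map int r)) (1,1) = ?L n (1,1) - ?L m (1,1) + int (?L r (1,1))"
    for m r by (simp add: lookup_minus lookup_mapint)
  have main: "pol (subst f G) J n = subst (\<lambda>b. pol (f b)) (pol G) J n"
  proof (cases "0 \<le> ?L n (1,1)")
    case True
    have eq: "T1 j m r = T2 j m r" for j m r
    proof (cases "j + rsz r \<le> J \<and> G j m \<noteq> 0 \<and> bincoef m r \<noteq> 0")
      case False then show ?thesis unfolding T1_def T2_def by (auto simp: pol_def)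
    next
      case c: True
      define q where "q = n - (m - Poly_Mapping.map int r)"
      define k where "k = J - j - rsz r"
      have h: "SS (hprod f r)" "pol (hprod f r) = hprod (\<lambda>b. pol (f b)) r" using HO c by auto
      have m11: "?L m (1,1) \<le> 0" using GS c unfolding SS_def by blast
      show ?thesis
      proof (cases "?L m (1,1) < 0")
        case True
        then have "0 < ?L q (1,1)" using lq[of m r] \<open>0 \<le> ?L n (1,1)\<close> unfolding q_def by simp
        then have "hprod f r k q = 0" using h(1) unfolding SS_def by force
        moreover have "pol G j m = 0" using True by (simp add: pol_def)
        ultimately show ?thesis unfolding T1_def T2_def q_def[symmetric] k_def[symmetric] by simp
      next
        case False
        then have "pol G j m = G j m" by (simp add: pol_def)
        moreover have "0 \<le> ?L q (1,1)" using lq[of m r] \<open>0 \<le> ?L n (1,1)\<close> False m11 unfolding q_def by simp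
        then have "hprod (\<lambda>b. pol (f b)) r k q = hprod f r k q" unfolding h(2)[symmetric]
          by (simp add: pol_def)
        ultimately show ?thesis unfolding T1_def T2_def q_def[symmetric] k_def[symmetric] by simp
      qed
    qed
    have "(\<lambda>(j, m, r). T1 j m r) = (\<lambda>(j, m, r). T2 j m r)"
      by (intro ext) (auto simp: eq split: prod.splits)
    then show ?thesis using True s1 s2 by (simp add: pol_def)
  next
    case False
    have z: "T2 j m r = 0" for j m r
    proof (cases "j + rsz r \<le> J \<and> pol G j m \<noteq> 0 \<and> bincoef m r \<noteq> 0")
      case False then show ?thesis unfolding T2_def by auto
    next
      case c: True
      define q where "q = n - (m - Poly_Mapping.map int r)"
      define k where "k = J - j - rsz r"
      have Gnz: "G j m \<noteq> 0" "0 \<le> ?L m (1,1)" using c by (auto simp: pol_def split: if_splits)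
      have h: "pol (hprod f r) = hprod (\<lambda>b. pol (f b)) r" using HO c Gnz by auto
      have "?L m (1,1) = 0" using GS Gnz unfolding SS_def by force
      then have "(1,1) \<notin> Poly_Mapping.keys m" by (simp add: in_keys_iff)
      then have "(1,1) \<notin> Poly_Mapping.keys r" using bincoef_keys c by blast
      then have "?L r (1,1) = 0" by (simp add: in_keys_iff)
      then have "?L q (1,1) < 0" using lq[of m r] False \<open>?L m (1,1) = 0\<close> unfolding q_def by simp
      then have "hprod (\<lambda>b. pol (f b)) r k q = 0" unfolding h[symmetric] by (simp add: pol_def)
      then show ?thesis unfolding T2_def q_def[symmetric] k_def[symmetric] by simp
    qed
    have "fsum (\<lambda>(j, m, r). T2 j m r) = 0" by (rule fsum_zero) (auto simp: z split: prod.splits)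
    then show ?thesis using False s2 by (simp add: pol_def)
  qed
  show "pol (subst f (miura g a)) J n = subst (\<lambda>b. pol (f b)) (miura (\<lambda>b. pol (g b)) a) J n"
    using main unfolding G' G_def .
qed

end
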